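(* Let $X,Y$ be vector spaces in separating duality, $X$ with $\sigma(X,Y)$. Let $f:X\to(-\infty,+\infty]$ be convex, lower semicontinuous, with $\mathrm{dom}\,f$ contained in a compact set, and let $V\subset X$ be closed and convex. If $V\cap\mathrm{dom}\,f\ne\emptyset$ or $V\cap\mathrm{cl}\,\mathrm{dom}\,f=\emptyset$, then $$\inf_{x\in V}f(x)=-\inf_{y\in Y}\big(f^*(y)+\xi_V^*(-y)\big)\in(-\infty,\infty].$$ If $V$ satisfies neither condition, then for every closed convex $W\subset\mathrm{int}\,V$, $$\inf_{x\in W}f(x)=-\inf_{y\in Y}\big(f^*(y)+\xi_W^*(-y)\big)=+\infty.$$
   Context: $\xi_C$: convex indicator of $C$ ($0$ on $C$, $+\infty$ outside); $\xi_C^*(y)=\sup_{x\in C}\langle x,y\rangle$ its support function. $f^*(y)=\sup_x\{\langle x,y\rangle-f(x)\}$. $\mathrm{dom}\,f=\{f<\infty\}$. *)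

theory Defs
  imports "HOL-Analysis.Analysis"
begin

definition separating_duality :: "('x::real_vector \<Rightarrow> 'y::real_vector \<Rightarrow> real) \<Rightarrow> bool" where
  "separating_duality B \<longleftrightarrow>
     (\<forall>y. linear (\<lambda>x. B x y)) \<and> (\<forall>x. linear (\<lambda>y. B x y)) \<and>
     (\<forall>x. x \<noteq> 0 \<longrightarrow> (\<exists>y. B x y \<noteq> 0)) \<and>
     (\<forall>y. y \<noteq> 0 \<longrightarrow> (\<exists>x. B x y \<noteq> 0))"

definition weak_top :: "('x \<Rightarrow> 'y \<Rightarrow> real) \<Rightarrow> 'x topology" where
  "weak_top B = topology_generated_by {(\<lambda>x. B x y) -` U | y U. open U}"

definition ereal_convex_fun :: "('x::real_vector \<Rightarrow> ereal) \<Rightarrow> bool" where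
  "ereal_convex_fun f \<longleftrightarrow>
     (\<forall>x y. \<forall>t::real. 0 < t \<and> t < 1 \<longrightarrow>
        f (t *\<^sub>R x + (1 - t) *\<^sub>R y) \<le> ereal t * f x + ereal (1 - t) * f y)"

definition lsc_on :: "'x topology \<Rightarrow> ('x \<Rightarrow> ereal) \<Rightarrow> bool" where
  "lsc_on T f \<longleftrightarrow> (\<forall>c::real. closedin T {x \<in> topspace T. f x \<le> ereal c})"

definition edom :: "('x \<Rightarrow> ereal) \<Rightarrow> 'x set" where
  "edom f = {x. f x < \<infinity>}"

definition fconj :: "('x \<Rightarrow> 'y \<Rightarrow> real) \<Rightarrow> ('x \<Rightarrow> ereal) \<Rightarrow> 'y \<Rightarrow> ereal" where
  "fconj B f y = (SUP x. ereal (B x y) - f x)"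

text \<open>Support function of C: conjugate of the convex indicator, sup_{x in C} <x,y>.\<close>
definition supp_fun :: "('x \<Rightarrow> 'y \<Rightarrow> real) \<Rightarrow> 'x set \<Rightarrow> 'y \<Rightarrow> ereal" where
  "supp_fun B C y = (SUP x\<in>C. ereal (B x y))"

end

theory Submission
  imports Defs
begin



lemma weak_topspace: "topspace (weak_top B) = UNIV"
proof -
  have m: "(\<lambda>x. B x undefined) -` UNIV \<in> {(\<lambda>x. B x y) -` U | y U. open U}"
    by (intro CollectI exI[of _ undefined] exI[of _ UNIV]) simp
  have "\<Union>{(\<lambda>x. B x y) -` U | y U. open U} = UNIV"
  proof (rule set_eqI)
    fix x
    have "x \<in> \<Union>{(\<lambda>x. B x y) -` U | y U. open U}" by (rule UnionI[OF m]) simp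
    then show "x \<in> \<Union>{(\<lambda>x. B x y) -` U | y U. open U} \<longleftrightarrow> x \<in> UNIV" by simp
  qed
  then show ?thesis unfolding weak_top_def topology_generated_by_topspace .
qed

definition nb :: "('x \<Rightarrow> 'y \<Rightarrow> real) \<Rightarrow> 'x \<Rightarrow> 'y set \<Rightarrow> real \<Rightarrow> 'x set" where
  "nb B x Y e = {z. \<forall>y\<in>Y. \<bar>B z y - B x y\<bar> < e}"

lemma nb_open: "finite Y \<Longrightarrow> openin (weak_top B) (nb B x Y e)"
proof (induction Y rule: finite_induct)
  case empty
  have "nb B x {} e = UNIV" by (simp add: nb_def)
  then show ?case using openin_topspace[of "weak_top B"] unfolding weak_topspace by simp
next
  case (insert y Y)
  have "nb B x (insert y Y) e = ((\<lambda>z. B z y) -` ball (B x y) e) \<inter> nb B x Y e"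
    by (auto simp: nb_def dist_real_def abs_minus_commute)
  moreover have "openin (weak_top B) ((\<lambda>z. B z y) -` ball (B x y) e)"
    unfolding weak_top_def by (rule topology_generated_by_Basis) auto
  ultimately show ?case using openin_Int[OF _ insert.IH] by simp
qed

lemma nb_basis_aux:
  assumes "generate_topology_on {(\<lambda>x. B x y) -` U | y U. open U} S"
  shows "\<forall>x\<in>S. \<exists>Y e. finite Y \<and> e > 0 \<and> nb B x Y e \<subseteq> S"
  using assms
proof (induction rule: generate_topology_on.induct)
  case Empty
  then show ?case by simp
next
  case (Int a b)
  show ?case
  proof
    fix x assume x: "x \<in> a \<inter> b"
    obtain Y1 e1 where 1: "finite Y1" "e1 > 0" "nb B x Y1 e1 \<subseteq> a" using Int.IH(1) x by blast
    obtain Y2 e2 where 2: "finite Y2" "e2 > 0" "nb B x Y2 e2 \<subseteq> b" using Int.IH(2) x by blast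
    have s1: "nb B x (Y1 \<union> Y2) (min e1 e2) \<subseteq> nb B x Y1 e1" by (auto simp: nb_def)
    have s2: "nb B x (Y1 \<union> Y2) (min e1 e2) \<subseteq> nb B x Y2 e2" by (auto simp: nb_def)
    have "nb B x (Y1 \<union> Y2) (min e1 e2) \<subseteq> a \<inter> b" using s1 s2 1(3) 2(3) by blast
    moreover have "finite (Y1 \<union> Y2)" "min e1 e2 > 0" using 1 2 by auto
    ultimately show "\<exists>Y e. finite Y \<and> e > 0 \<and> nb B x Y e \<subseteq> a \<inter> b" by blast
  qed
next
  case (UN K)
  show ?case
  proof
    fix x assume "x \<in> \<Union>K"
    then obtain k where k: "k \<in> K" "x \<in> k" by blast
    then obtain Y e where Ye: "finite Y" "e > 0" "nb B x Y e \<subseteq> k" using UN.IH[OF k(1)] by blast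
    have "nb B x Y e \<subseteq> \<Union>K" using Ye(3) k(1) by blast
    then show "\<exists>Y e. finite Y \<and> e > 0 \<and> nb B x Y e \<subseteq> \<Union>K" using Ye(1,2) by blast
  qed
next
  case (Basis s)
  then obtain y U where s: "s = (\<lambda>x. B x y) -` U" "open U" by blast
  show ?case
  proof
    fix x assume "x \<in> s"
    then have "B x y \<in> U" using s by simp
    then obtain e where e: "e > 0" "ball (B x y) e \<subseteq> U" using s(2) open_contains_ball by blast
    have "nb B x {y} e \<subseteq> s"
    proof
      fix z assume "z \<in> nb B x {y} e"
      then have "\<bar>B z y - B x y\<bar> < e" by (simp add: nb_def)
      then have "B z y \<in> ball (B x y) e" by (simp add: dist_real_def abs_minus_commute)
      then show "z \<in> s" using e(2) s(1) by blast
    qed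
    then show "\<exists>Y e. finite Y \<and> e > 0 \<and> nb B x Y e \<subseteq> s" using e(1) by blast
  qed
qed

lemma nb_basis:
  assumes "openin (weak_top B) S" "x \<in> S"
  shows "\<exists>Y e. finite Y \<and> e > 0 \<and> nb B x Y e \<subseteq> S"
  using nb_basis_aux[OF openin_topology_generated_by[OF assms(1)[unfolded weak_top_def]]] assms(2)
  by blast

lemma lsc_open:
  assumes "lsc_on (weak_top B) f"
  shows "openin (weak_top B) {x. ereal c < f x}"
proof -
  have "closedin (weak_top B) {x. f x \<le> ereal c}"
    using assms weak_topspace[of B] by (simp add: lsc_on_def)
  then have "openin (weak_top B) (UNIV - {x. f x \<le> ereal c})"
    using weak_topspace[of B] by (simp add: closedin_def)
  moreover have "UNIV - {x. f x \<le> ereal c} = {x. ereal c < f x}" by auto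
  ultimately show ?thesis by simp
qed

lemma lower_bound:
  assumes lsc: "lsc_on (weak_top B) f" and ninf: "\<forall>x. f x \<noteq> -\<infinity>"
    and cpt: "compactin (weak_top B) K" and dom: "edom f \<subseteq> K"
  shows "\<exists>b::real. \<forall>x. ereal b \<le> f x"
proof -
  define g where "g n = {x. ereal (- real n) < f x}" for n :: nat
  have op: "\<forall>U\<in>range g. openin (weak_top B) U" using lsc_open[OF lsc] by (auto simp: g_def)
  have cov: "K \<subseteq> \<Union>(range g)"
  proof
    fix x assume "x \<in> K"
    show "x \<in> \<Union>(range g)"
    proof (cases "f x")
      case (real r)
      obtain n :: nat where "- r < real n" using reals_Archimedean2 by blast
      then show ?thesis using real by (auto simp: g_def intro!: exI[of _ n])
    next
      case PInf then show ?thesis by (auto simp: g_def)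
    next
      case MInf then show ?thesis using ninf by simp
    qed
  qed
  have cpt2: "\<forall>\<U>. (\<forall>U\<in>\<U>. openin (weak_top B) U) \<and> K \<subseteq> \<Union>\<U> \<longrightarrow> (\<exists>\<F>. finite \<F> \<and> \<F> \<subseteq> \<U> \<and> K \<subseteq> \<Union>\<F>)"
    using cpt unfolding compactin_def by (rule conjunct2)
  have "\<exists>\<F>. finite \<F> \<and> \<F> \<subseteq> range g \<and> K \<subseteq> \<Union>\<F>"
    by (rule mp[OF spec[OF cpt2, of "range g"] conjI[OF op cov]])
  then obtain F where F: "finite F" "F \<subseteq> range g" "K \<subseteq> \<Union>F" by blast
  then obtain N where N: "finite N" "F = g ` N" using finite_subset_image[OF F(1) F(2)] by blast
  show ?thesis
  proof (intro exI allI)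
    fix x
    show "ereal (- real (\<Sum>N)) \<le> f x"
    proof (cases "x \<in> K")
      case True
      then obtain n where "n \<in> N" "x \<in> g n" using F N by auto
      then have "n \<le> \<Sum>N" using N(1) member_le_sum[of n N "\<lambda>x. x"] by simp
      then have "real n \<le> real (\<Sum>N)" by (simp only: of_nat_le_iff)
      then have "ereal (- real (\<Sum>N)) \<le> ereal (- real n)" by (simp only: ereal_less_eq(3) neg_le_iff_le)
      also have "\<dots> < f x" using \<open>x \<in> g n\<close> by (simp add: g_def)
      finally show ?thesis by simp
    next
      case False
      then have "f x = \<infinity>" using dom by (auto simp: edom_def)
      then show ?thesis by simp
    qed
  qed
qed



lemma pw_aux: "((u + v)/2)^2 + ((u - v)/2)^2 = ((u::real)^2 + v^2)/2"
  by (simp add: power2_eq_square field_simps)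
lemma pw_aux2: "(x::real)^2 = 4 * (x/2)^2"
  by (simp add: power2_eq_square field_simps)

lemma sep_fin:
  fixes \<phi> :: "'i \<Rightarrow> 'z::real_vector \<Rightarrow> real"
  assumes fin: "finite I" and lin: "\<And>i. i \<in> I \<Longrightarrow> linear (\<phi> i)" and cvx: "convex C"
    and e: "\<epsilon> > 0" and far: "\<And>c. c \<in> C \<Longrightarrow> \<exists>i\<in>I. \<epsilon> \<le> \<bar>\<phi> i c\<bar>"
  shows "\<exists>w \<delta>. \<delta> > 0 \<and> (\<forall>c\<in>C. \<delta> \<le> (\<Sum>i\<in>I. w i * \<phi> i c))"
proof (cases "C = {}")
  case True then show ?thesis by (intro exI[of _ "\<lambda>i. 0"] exI[of _ 1]) auto
next
  case False
  define Q where "Q c = (\<Sum>i\<in>I. (\<phi> i c)^2)" for c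
  have Qge: "\<epsilon>^2 \<le> Q c" if cC: "c \<in> C" for c
  proof -
    obtain i where i: "i\<in>I" "\<epsilon> \<le> \<bar>\<phi> i c\<bar>" using far cC by blast
    have "\<epsilon>^2 \<le> \<bar>\<phi> i c\<bar>^2" using i e by (intro power_mono) auto
    also have "\<dots> = (\<phi> i c)^2" by simp
    also have "\<dots> \<le> Q c" unfolding Q_def using fin i(1) by (intro member_le_sum) auto
    finally show ?thesis .
  qed
  define d where "d = Inf (Q ` C)"
  have bdd: "bdd_below (Q ` C)" using Qge by (intro bdd_belowI2) 
  have dle: "d \<le> Q c" if "c \<in> C" for c unfolding d_def using that bdd by (intro cInf_lower) auto
  have dge: "\<epsilon>^2 \<le> d" unfolding d_def using False Qge by (intro cInf_greatest) auto
  have "\<forall>k::nat. \<exists>c\<in>C. Q c < d + inverse (real (Suc k))"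
  proof
    fix k :: nat
    have "Inf (Q ` C) < d + inverse (real (Suc k))" unfolding d_def by simp
    then obtain x where "x \<in> Q ` C" "x < d + inverse (real (Suc k))"
      using cInf_lessD[of "Q ` C"] False by blast
    then show "\<exists>c\<in>C. Q c < d + inverse (real (Suc k))" by auto
  qed
  then obtain s where sC: "\<And>k. s k \<in> C" and sQ: "\<And>k. Q (s k) < d + inverse (real (Suc k))"
    by metis
  have para: "(\<phi> i a - \<phi> i b)^2 \<le> 2*(Q a + Q b) - 4*d" if ab: "a\<in>C" "b\<in>C" and i: "i\<in>I" for a b i
  proof -
    define m where "m = (1/2) *\<^sub>R a + (1/2) *\<^sub>R b"
    have mC: "m \<in> C" unfolding m_def using cvx ab by (intro convexD) auto
    have phim: "\<phi> j m = (\<phi> j a + \<phi> j b)/2" if "j\<in>I" for j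
      using lin[OF that] unfolding m_def by (simp add: linear_add linear_scale)
    have pw: "((\<phi> j a + \<phi> j b)/2)^2 + ((\<phi> j a - \<phi> j b)/2)^2 = ((\<phi> j a)^2 + (\<phi> j b)^2)/2" for j
      by (rule pw_aux)
    have "Q m + (\<Sum>j\<in>I. ((\<phi> j a - \<phi> j b)/2)^2) = (\<Sum>j\<in>I. ((\<phi> j a + \<phi> j b)/2)^2 + ((\<phi> j a - \<phi> j b)/2)^2)"
    proof -
      have "Q m = (\<Sum>j\<in>I. ((\<phi> j a + \<phi> j b)/2)^2)" unfolding Q_def by (intro sum.cong refl) (simp add: phim)
      then show ?thesis by (simp only: sum.distrib)
    qed
    also have "\<dots> = (\<Sum>j\<in>I. ((\<phi> j a)^2 + (\<phi> j b)^2)/2)" by (simp only: pw)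
    also have "\<dots> = (\<Sum>j\<in>I. (\<phi> j a)^2 + (\<phi> j b)^2)/2" by (rule sum_divide_distrib[symmetric])
    also have "\<dots> = (Q a + Q b)/2" unfolding Q_def by (simp only: sum.distrib)
    finally have eq: "Q m + (\<Sum>j\<in>I. ((\<phi> j a - \<phi> j b)/2)^2) = (Q a + Q b)/2" .
    have "((\<phi> i a - \<phi> i b)/2)^2 \<le> (\<Sum>j\<in>I. ((\<phi> j a - \<phi> j b)/2)^2)"
      using fin i by (intro member_le_sum) auto
    moreover have "d \<le> Q m" using dle mC by blast
    ultimately have "((\<phi> i a - \<phi> i b)/2)^2 \<le> (Q a + Q b)/2 - d" using eq by linarith
    moreover have "(\<phi> i a - \<phi> i b)^2 = 4 * ((\<phi> i a - \<phi> i b)/2)^2" by (rule pw_aux2)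
    ultimately show ?thesis by linarith
  qed
  have cauchy: "Cauchy (\<lambda>k. \<phi> i (s k))" if i: "i \<in> I" for i
  proof (rule metric_CauchyI)
    fix e :: real assume "0 < e"
    obtain M :: nat where M: "4 / e^2 < real M" using reals_Archimedean2 by blast
    have "4 / e^2 > 0" using \<open>0<e\<close> by simp
    have Mpos: "0 < real M" using M \<open>4/e^2>0\<close> by linarith
    show "\<exists>M. \<forall>m\<ge>M. \<forall>n\<ge>M. dist (\<phi> i (s m)) (\<phi> i (s n)) < e"
    proof (intro exI allI impI)
      fix m n assume mn: "M \<le> m" "M \<le> n"
      have im: "inverse (real (Suc m)) \<le> inverse (real M)" using mn Mpos
        by (intro le_imp_inverse_le) auto
      have iN: "inverse (real (Suc n)) \<le> inverse (real M)" using mn Mpos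
        by (intro le_imp_inverse_le) auto
      have "(\<phi> i (s m) - \<phi> i (s n))^2 \<le> 2*(Q (s m) + Q (s n)) - 4*d"
        using para sC i by blast
      also have "\<dots> < 2*((d + inverse (real (Suc m))) + (d + inverse (real (Suc n)))) - 4*d"
        by (intro diff_strict_right_mono mult_strict_left_mono add_strict_mono sQ) auto
      also have "\<dots> \<le> 4 * inverse (real M)"
      proof -
        define a1 where "a1 = inverse (real (Suc m))"
        define a2 where "a2 = inverse (real (Suc n))"
        define a3 where "a3 = inverse (real M)"
        have "a1 \<le> a3" "a2 \<le> a3" using im iN by (simp_all add: a1_def a2_def a3_def)
        then have "2*a1 + 2*a2 \<le> 2*a3 + 2*a3" by (intro add_mono) auto
        then show ?thesis unfolding a1_def[symmetric] a2_def[symmetric] a3_def[symmetric]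
          by (simp add: algebra_simps)
      qed
      also have "\<dots> < e^2"
      proof -
        have e2: "0 < e^2" using \<open>0<e\<close> by simp
        have "4 < real M * e^2" using M pos_divide_less_eq[OF e2, of 4 "real M"] by simp
        then have "4 / real M < e^2" using Mpos by (simp add: pos_divide_less_eq mult.commute)
        then show ?thesis by (simp add: divide_inverse)
      qed
      finally have sq: "(\<phi> i (s m) - \<phi> i (s n))^2 < e^2" .
      have "\<bar>\<phi> i (s m) - \<phi> i (s n)\<bar>^2 < e^2" unfolding power2_abs by (rule sq)
      then have "\<bar>\<phi> i (s m) - \<phi> i (s n)\<bar> < e"
        by (rule power_less_imp_less_base) (use \<open>0<e\<close> in simp)
      then show "dist (\<phi> i (s m)) (\<phi> i (s n)) < e" by (simp add: dist_real_def)
    qed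
  qed
  define q where "q i = lim (\<lambda>k. \<phi> i (s k))" for i
  have q: "(\<lambda>k. \<phi> i (s k)) \<longlonglongrightarrow> q i" if "i \<in> I" for i
    unfolding q_def using cauchy[OF that] by (simp add: Cauchy_convergent_iff convergent_LIMSEQ_iff)
  have Qlim: "(\<lambda>k. Q (s k)) \<longlonglongrightarrow> (\<Sum>i\<in>I. (q i)^2)"
    unfolding Q_def by (intro tendsto_sum tendsto_power q)
  have dlim: "(\<lambda>k. d + inverse (real (Suc k))) \<longlonglongrightarrow> d"
    using tendsto_add[OF tendsto_const LIMSEQ_inverse_real_of_nat, of d] by simp
  have sq1: "(\<Sum>i\<in>I. (q i)^2) \<le> d"
    using Qlim dlim by (rule LIMSEQ_le) (use sQ less_imp_le in blast)
  have sq2: "d \<le> (\<Sum>i\<in>I. (q i)^2)"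
    using Qlim by (rule LIMSEQ_le_const) (use dle sC in blast)
  have sqd: "(\<Sum>i\<in>I. (q i)^2) = d" using sq1 sq2 by linarith
  show ?thesis
  proof (intro exI conjI ballI)
    show "\<epsilon>^2 > 0" using e by simp
    fix c assume cC: "c \<in> C"
    define A where "A = (\<Sum>i\<in>I. q i * (\<phi> i c - q i))"
    define Bq where "Bq = (\<Sum>i\<in>I. (\<phi> i c - q i)^2)"
    have Bq0: "0 \<le> Bq" unfolding Bq_def by (intro sum_nonneg) auto
    have var: "0 \<le> 2*A + t*Bq" if t: "0 < t" "t \<le> 1" for t
    proof -
      have lim: "(\<lambda>k. Q ((1-t) *\<^sub>R s k + t *\<^sub>R c)) \<longlonglongrightarrow> (\<Sum>i\<in>I. ((1-t) * q i + t * \<phi> i c)^2)"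
      proof -
        have "(\<lambda>k. Q ((1-t) *\<^sub>R s k + t *\<^sub>R c)) = (\<lambda>k. \<Sum>i\<in>I. ((1-t) * \<phi> i (s k) + t * \<phi> i c)^2)"
          unfolding Q_def by (intro ext sum.cong refl) (simp add: lin linear_add linear_scale)
        moreover have "(\<lambda>k. \<Sum>i\<in>I. ((1-t) * \<phi> i (s k) + t * \<phi> i c)^2) \<longlonglongrightarrow> (\<Sum>i\<in>I. ((1-t) * q i + t * \<phi> i c)^2)"
          by (intro tendsto_sum tendsto_power tendsto_add tendsto_mult tendsto_const q)
        ultimately show ?thesis by simp
      qed
      have "d \<le> (\<Sum>i\<in>I. ((1-t) * q i + t * \<phi> i c)^2)"
      proof (rule LIMSEQ_le_const[OF lim], intro exI allI impI)
        fix n :: nat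
        have "(1-t) *\<^sub>R s n + t *\<^sub>R c \<in> C" using cvx sC[of n] cC t by (intro convexD) auto
        then show "d \<le> Q ((1-t) *\<^sub>R s n + t *\<^sub>R c)" by (rule dle)
      qed
      also have "\<dots> = (\<Sum>i\<in>I. (q i)^2 + 2*t*(q i * (\<phi> i c - q i)) + t^2 * (\<phi> i c - q i)^2)"
        by (intro sum.cong refl) algebra
      also have "\<dots> = (\<Sum>i\<in>I. (q i)^2) + (\<Sum>i\<in>I. 2*t*(q i * (\<phi> i c - q i))) + (\<Sum>i\<in>I. t^2 * (\<phi> i c - q i)^2)"
        by (simp only: sum.distrib)
      also have "\<dots> = d + 2*t*A + t^2*Bq"
        unfolding A_def Bq_def sqd by (simp only: sum_distrib_left)
      finally have h: "d \<le> d + 2*t*A + t^2*Bq" .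
      have "t * (2*A + t*Bq) = 2*t*A + t^2*Bq" by algebra
      then have "0 \<le> t * (2*A + t*Bq)" using h by linarith
      then show ?thesis using t by (simp add: zero_le_mult_iff)
    qed
    have A0: "0 \<le> A"
    proof (rule ccontr)
      assume "\<not> 0 \<le> A"
      then have An: "A < 0" by simp
      show False
      proof (cases "Bq = 0")
        case True then show False using var[of 1] An by simp
      next
        case False
        then have Bp: "Bq > 0" using Bq0 by simp
        define t where "t = min 1 (- A / Bq)"
        have "0 < t" using An Bp by (simp add: t_def divide_neg_pos)
        moreover have "t \<le> 1" by (simp add: t_def)
        moreover have "t * Bq \<le> - A"
        proof -
          have "t \<le> - A / Bq" by (simp add: t_def)
          then have "t * Bq \<le> (- A / Bq) * Bq" using Bp by (intro mult_right_mono) auto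
          also have "\<dots> = - A" using Bp by simp
          finally show ?thesis .
        qed
        ultimately show False using var[of t] An by linarith
      qed
    qed
    have "(\<Sum>i\<in>I. q i * \<phi> i c) = (\<Sum>i\<in>I. (q i)^2 + q i * (\<phi> i c - q i))"
      by (intro sum.cong refl) (simp add: power2_eq_square algebra_simps)
    also have "\<dots> = (\<Sum>i\<in>I. (q i)^2) + A" unfolding A_def by (rule sum.distrib)
    finally have "(\<Sum>i\<in>I. q i * \<phi> i c) = (\<Sum>i\<in>I. (q i)^2) + A" .
    then show "\<epsilon>^2 \<le> (\<Sum>i\<in>I. q i * \<phi> i c)" using A0 sqd dge by linarith
  qed
qed



lemma nbhd_lemma:
  assumes lsc: "lsc_on (weak_top B) f" and cpt: "compactin (weak_top B) K" and dom: "edom f \<subseteq> K"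
    and Vc: "closedin (weak_top B) V" and cc: "c < c'" and Vgt: "\<forall>v\<in>V. ereal c' < f v"
  shows "\<exists>Y e. finite Y \<and> e > 0 \<and> (\<forall>x v. v \<in> V \<longrightarrow> (\<forall>y\<in>Y. \<bar>B x y - B v y\<bar> < e) \<longrightarrow> ereal (c + e) \<le> f x)"
proof -
  define S where "S = {x. f x \<le> ereal c'}"
  have "closedin (weak_top B) S"
    using lsc weak_topspace[of B] by (simp add: lsc_on_def S_def)
  moreover have "S \<subseteq> K" using dom by (auto simp: S_def edom_def)
  ultimately have Scpt: "compactin (weak_top B) S" using cpt closed_compactin by blast
  have Vo: "openin (weak_top B) (UNIV - V)" using Vc weak_topspace[of B] by (simp add: closedin_def)
  have "\<forall>s\<in>S. \<exists>Y e. finite Y \<and> e > 0 \<and> nb B s Y e \<subseteq> UNIV - V"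
  proof
    fix s assume "s \<in> S"
    then have "s \<notin> V" using Vgt by (force simp: S_def)
    then show "\<exists>Y e. finite Y \<and> e > 0 \<and> nb B s Y e \<subseteq> UNIV - V" using nb_basis[OF Vo] by blast
  qed
  then have "\<exists>Yf. \<forall>s\<in>S. \<exists>e. finite (Yf s) \<and> e > 0 \<and> nb B s (Yf s) e \<subseteq> UNIV - V" by (rule bchoice)
  then obtain Yf where "\<forall>s\<in>S. \<exists>e. finite (Yf s) \<and> e > 0 \<and> nb B s (Yf s) e \<subseteq> UNIV - V" by blast
  then have "\<exists>ef. \<forall>s\<in>S. finite (Yf s) \<and> ef s > 0 \<and> nb B s (Yf s) (ef s) \<subseteq> UNIV - V" by (rule bchoice)
  then obtain ef where YE': "\<forall>s\<in>S. finite (Yf s) \<and> ef s > 0 \<and> nb B s (Yf s) (ef s) \<subseteq> UNIV - V" by blast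
  have YE: "\<And>s. s \<in> S \<Longrightarrow> finite (Yf s) \<and> ef s > 0 \<and> nb B s (Yf s) (ef s) \<subseteq> UNIV - V"
    using YE' by blast
  define g where "g s = nb B s (Yf s) (ef s / 2)" for s
  have "\<forall>U\<in>g ` S. openin (weak_top B) U" using YE by (auto simp: g_def intro!: nb_open)
  moreover have "S \<subseteq> \<Union>(g ` S)"
  proof
    fix s assume sS: "s \<in> S"
    then have "s \<in> g s" using YE[of s] by (simp add: g_def nb_def)
    then show "s \<in> \<Union>(g ` S)" using sS by blast
  qed
  ultimately have oc: "(\<forall>U\<in>g ` S. openin (weak_top B) U) \<and> S \<subseteq> \<Union>(g ` S)" by (rule conjI)
  have cpt2: "\<forall>\<U>. (\<forall>U\<in>\<U>. openin (weak_top B) U) \<and> S \<subseteq> \<Union>\<U> \<longrightarrow> (\<exists>\<F>. finite \<F> \<and> \<F> \<subseteq> \<U> \<and> S \<subseteq> \<Union>\<F>)"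
    using Scpt unfolding compactin_def by (rule conjunct2)
  have "\<exists>\<F>. finite \<F> \<and> \<F> \<subseteq> g ` S \<and> S \<subseteq> \<Union>\<F>"
    by (rule mp[OF spec[OF cpt2, of "g ` S"] oc])
  then obtain F where F: "finite F" "F \<subseteq> g ` S" "S \<subseteq> \<Union>F" by blast
  then obtain S0 where S0: "S0 \<subseteq> S" "finite S0" "F = g ` S0" using finite_subset_image[OF F(1) F(2)] by blast
  define Y where "Y = \<Union>(Yf ` S0)"
  define e where "e = Min (insert (c' - c) ((\<lambda>s. ef s / 2) ` S0))"
  have finY: "finite Y" unfolding Y_def using S0 YE by auto
  have epos: "e > 0" unfolding e_def using S0 YE cc by (subst Min_gr_iff) auto
  have ele: "e \<le> c' - c" unfolding e_def using S0 by auto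
  have eles: "e \<le> ef s / 2" if "s \<in> S0" for s unfolding e_def using S0 that by (intro Min_le) auto
  show ?thesis
  proof (intro exI conjI allI impI)
    show "finite Y" "e > 0" by (fact finY, fact epos)
    fix x v assume vV: "v \<in> V" and cl: "\<forall>y\<in>Y. \<bar>B x y - B v y\<bar> < e"
    show "ereal (c + e) \<le> f x"
    proof (cases "x \<in> S")
      case True
      then obtain s where s: "s \<in> S0" "x \<in> g s" using F S0 by auto
      have "v \<in> nb B s (Yf s) (ef s)"
        unfolding nb_def
      proof (intro CollectI ballI)
        fix y assume y: "y \<in> Yf s"
        have "\<bar>B x y - B s y\<bar> < ef s / 2" using s y by (auto simp: g_def nb_def)
        moreover have "\<bar>B x y - B v y\<bar> < e" using cl y s by (auto simp: Y_def)
        ultimately show "\<bar>B v y - B s y\<bar> < ef s" using eles[OF s(1)] by linarith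
      qed
      then have False using YE[of s] s S0 vV by auto
      then show ?thesis ..
    next
      case False
      then have "ereal c' < f x" by (simp add: S_def not_le)
      moreover have "ereal (c + e) \<le> ereal c'" using ele by simp
      ultimately show ?thesis by (meson less_imp_le order_trans)
    qed
  qed
qed

lemma main_dual:
  fixes B :: "'x::real_vector \<Rightarrow> 'y::real_vector \<Rightarrow> real"
    and f :: "'x \<Rightarrow> ereal" and V :: "'x set"
  assumes dual: "separating_duality B"
    and f_nonneginf: "\<forall>x. f x \<noteq> -\<infinity>"
    and f_convex: "ereal_convex_fun f"
    and f_lsc: "lsc_on (weak_top B) f"
    and dom_cpt: "\<exists>K. compactin (weak_top B) K \<and> edom f \<subseteq> K"
    and V_closed: "closedin (weak_top B) V"
    and V_convex: "convex V"
  shows "(INF x\<in>V. f x) = - (INF y. fconj B f y + supp_fun B V (- y)) \<and> (INF x\<in>V. f x) \<noteq> -\<infinity>"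
proof -
  have lin1: "\<And>y. linear (\<lambda>x. B x y)" and lin2: "\<And>x. linear (\<lambda>y. B x y)"
    using dual by (auto simp: separating_duality_def)
  obtain K where K: "compactin (weak_top B) K" "edom f \<subseteq> K" using dom_cpt by blast
  obtain b :: real where b: "\<And>x. ereal b \<le> f x" using lower_bound[OF f_lsc f_nonneginf K] by blast
  define P where "P = (INF x\<in>V. f x)"
  define D where "D = (INF y. fconj B f y + supp_fun B V (- y))"
  have Pb: "ereal b \<le> P" unfolding P_def using b by (intro INF_greatest) auto
  have weak: "- D \<le> P"
    unfolding P_def
  proof (intro INF_greatest)
    fix x assume xV: "x \<in> V"
    have "- f x \<le> D"
      unfolding D_def
    proof (intro INF_greatest)
      fix y
      have h1: "ereal (B x y) - f x \<le> fconj B f y" unfolding fconj_def by (intro SUP_upper) auto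
      have h2: "ereal (B x (- y)) \<le> supp_fun B V (- y)" unfolding supp_fun_def using xV by (intro SUP_upper)
      have "B x (- y) = - B x y" by (simp add: linear_neg[OF lin2[of x]])
      then have h3: "(ereal (B x y) - f x) + ereal (B x (- y)) = - f x"
        using f_nonneginf by (cases "f x") auto
      show "- f x \<le> fconj B f y + supp_fun B V (- y)"
        using add_mono[OF h1 h2] h3 by simp
    qed
    then show "- D \<le> f x" by (simp add: ereal_uminus_le_reorder)
  qed
  have key: "D \<le> ereal (- c)" if cP: "ereal c < P" for c
  proof (cases "V = {} \<or> edom f = {}")
    case True
    have "fconj B f 0 + supp_fun B V (- 0) = -\<infinity>"
    proof (cases "V = {}")
      case True
      have "supp_fun B V (- 0) = -\<infinity>" using True by (simp add: supp_fun_def bot_ereal_def)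
      moreover have "fconj B f 0 \<le> ereal (- b)"
        unfolding fconj_def
      proof (intro SUP_least)
        fix x
        have "B x 0 = 0" by (simp add: linear_0[OF lin2[of x]])
        then show "ereal (B x 0) - f x \<le> ereal (- b)" using b[of x] f_nonneginf
          by (cases "f x") auto
      qed
      ultimately show ?thesis by (cases "fconj B f 0") auto
    next
      case False
      then have ed: "edom f = {}" using \<open>V = {} \<or> edom f = {}\<close> by blast
      have "fconj B f 0 = -\<infinity>" unfolding fconj_def using ed by (auto simp: edom_def)
      moreover have "supp_fun B V (- 0) \<le> 0"
        unfolding supp_fun_def
      proof (intro SUP_least)
        fix x
        have "B x 0 = 0" by (simp add: linear_0[OF lin2[of x]])
        then show "ereal (B x (- 0)) \<le> 0" by simp
      qed
      ultimately show ?thesis by (cases "supp_fun B V (- 0)") auto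
    qed
    moreover have "D \<le> fconj B f 0 + supp_fun B V (- 0)" unfolding D_def by (rule INF_lower) simp
    ultimately have "D \<le> -\<infinity>" by (simp only:)
    then show ?thesis by simp
  next
    case False
    then obtain x0 v0 where v0: "v0 \<in> V" and x0: "x0 \<in> edom f" by blast
    then obtain r0 where r0: "f x0 = ereal r0" using f_nonneginf by (cases "f x0") (auto simp: edom_def)
    obtain c' where c': "ereal c < ereal c'" "ereal c' < P" using ereal_dense2[OF cP] by blast
    have Vgt: "\<forall>v\<in>V. ereal c' < f v" using c'(2) unfolding P_def by (meson INF_lower less_le_trans)
    have "\<exists>Y e. finite Y \<and> e > 0 \<and> (\<forall>x v. v \<in> V \<longrightarrow> (\<forall>y\<in>Y. \<bar>B x y - B v y\<bar> < e) \<longrightarrow> ereal (c + e) \<le> f x)"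
      using nbhd_lemma[OF f_lsc K(1) K(2) V_closed _ Vgt] c'(1) by simp
    then obtain Y0 e where Ye: "finite Y0" "e > 0"
      and nbh: "\<forall>x v. v \<in> V \<longrightarrow> (\<forall>y\<in>Y0. \<bar>B x y - B v y\<bar> < e) \<longrightarrow> ereal (c + e) \<le> f x"
      by blast
    define \<phi> :: "'y option \<Rightarrow> 'x \<times> real \<Rightarrow> real"
      where "\<phi> i p = (case i of None \<Rightarrow> snd p | Some y \<Rightarrow> B (fst p) y)" for i p
    define I where "I = insert None (Some ` Y0)"
    define C where "C = {p. \<exists>x v. v \<in> V \<and> fst p = x - v \<and> f x \<le> ereal (c + snd p)}"
    have finI: "finite I" using Ye by (simp add: I_def)
    have linI: "linear (\<phi> i)" for i
    proof (cases i)
      case None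
      have "\<phi> None = snd" by (rule ext) (simp add: \<phi>_def)
      then show ?thesis using None by (auto intro!: linearI)
    next
      case (Some y)
      have "linear ((\<lambda>x. B x y) \<circ> fst)"
        by (intro linear_compose lin1) (auto intro!: linearI)
      moreover have "\<phi> (Some y) = (\<lambda>x. B x y) \<circ> fst" by (rule ext) (simp add: \<phi>_def)
      ultimately show ?thesis using Some by simp
    qed
    have cvxC: "convex C"
      unfolding convex_def
    proof (intro ballI allI impI)
      fix p1 p2 and u w :: real
      assume p1: "p1 \<in> C" and p2: "p2 \<in> C" and uw: "0 \<le> u" "0 \<le> w" "u + w = 1"
      obtain x1 v1 where 1: "v1 \<in> V" "fst p1 = x1 - v1" "f x1 \<le> ereal (c + snd p1)" using p1 C_def by auto
      obtain x2 v2 where 2: "v2 \<in> V" "fst p2 = x2 - v2" "f x2 \<le> ereal (c + snd p2)" using p2 C_def by auto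
      define xx where "xx = u *\<^sub>R x1 + w *\<^sub>R x2"
      define vv where "vv = u *\<^sub>R v1 + w *\<^sub>R v2"
      have vvV: "vv \<in> V" unfolding vv_def using V_convex 1 2 uw by (intro convexD) auto
      have fst: "fst (u *\<^sub>R p1 + w *\<^sub>R p2) = xx - vv"
      proof -
        have e1: "x1 = fst p1 + v1" and e2: "x2 = fst p2 + v2" using 1 2 by auto
        show ?thesis unfolding xx_def vv_def e1 e2 by (simp add: algebra_simps)
      qed
      have fx: "f xx \<le> ereal (c + snd (u *\<^sub>R p1 + w *\<^sub>R p2))"
      proof (cases "u = 0 \<or> w = 0")
        case True
        then show ?thesis
        proof
          assume "u = 0" then have "w = 1" using uw by simp
          then have "u *\<^sub>R p1 + w *\<^sub>R p2 = p2" "xx = x2" using \<open>u = 0\<close> by (simp_all add: xx_def)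
          then show ?thesis using 2 by simp
        next
          assume "w = 0" then have "u = 1" using uw by simp
          then have "u *\<^sub>R p1 + w *\<^sub>R p2 = p1" "xx = x1" using \<open>w = 0\<close> by (simp_all add: xx_def)
          then show ?thesis using 1 by simp
        qed
      next
        case False
        then have u01: "0 < u" "u < 1" using uw by auto
        have wu: "w = 1 - u" using uw by simp
        have "f xx \<le> ereal u * f x1 + ereal (1 - u) * f x2"
          using f_convex[unfolded ereal_convex_fun_def, rule_format, of u x1 x2] u01 unfolding xx_def wu by simp
        also have "\<dots> \<le> ereal u * ereal (c + snd p1) + ereal (1 - u) * ereal (c + snd p2)"
          using u01 1 2 by (intro add_mono ereal_mult_left_mono) auto
        also have "\<dots> = ereal (c + snd (u *\<^sub>R p1 + w *\<^sub>R p2))"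
          unfolding wu by (simp add: algebra_simps)
        finally show ?thesis .
      qed
      show "u *\<^sub>R p1 + w *\<^sub>R p2 \<in> C" unfolding C_def using vvV fst fx by (intro CollectI exI[of _ xx] exI[of _ vv]) simp
    qed
    have far: "\<exists>i\<in>I. e \<le> \<bar>\<phi> i p\<bar>" if pC: "p \<in> C" for p
    proof (rule ccontr)
      assume "\<not> (\<exists>i\<in>I. e \<le> \<bar>\<phi> i p\<bar>)"
      then have all: "\<forall>i\<in>I. \<bar>\<phi> i p\<bar> < e" by auto
      obtain x v where xv: "v \<in> V" "fst p = x - v" "f x \<le> ereal (c + snd p)" using pC C_def by auto
      have "\<bar>snd p\<bar> < e" using all by (auto simp: I_def \<phi>_def)
      moreover have "\<forall>y\<in>Y0. \<bar>B x y - B v y\<bar> < e"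
      proof
        fix y assume "y \<in> Y0"
        then have "\<bar>B (fst p) y\<bar> < e" using all by (auto simp: I_def \<phi>_def)
        moreover have "B (fst p) y = B x y - B v y" using xv by (simp add: linear_diff[OF lin1[of y]])
        ultimately show "\<bar>B x y - B v y\<bar> < e" by simp
      qed
      then have "ereal (c + e) \<le> f x" using nbh[rule_format, OF xv(1)] by simp
      with xv(3) have "c + e \<le> c + snd p" by (metis ereal_less_eq(3) order_trans)
      ultimately show False by linarith
    qed
    obtain w \<delta> where \<delta>: "\<delta> > 0" and sep: "\<And>p. p \<in> C \<Longrightarrow> \<delta> \<le> (\<Sum>i\<in>I. w i * \<phi> i p)"
      using sep_fin[OF finI linI cvxC Ye(2) far] by blast
    define \<mu> where "\<mu> = w None"
    define zz where "zz = (\<Sum>y\<in>Y0. w (Some y) *\<^sub>R y)"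
    have sumeq: "(\<Sum>i\<in>I. w i * \<phi> i p) = \<mu> * snd p + B (fst p) zz" for p
    proof -
      have "(\<Sum>i\<in>I. w i * \<phi> i p) = w None * \<phi> None p + (\<Sum>i\<in>Some ` Y0. w i * \<phi> i p)"
        unfolding I_def using Ye by (subst sum.insert) auto
      also have "(\<Sum>i\<in>Some ` Y0. w i * \<phi> i p) = (\<Sum>y\<in>Y0. w (Some y) * B (fst p) y)"
        by (subst sum.reindex) (auto simp: \<phi>_def)
      also have "\<dots> = B (fst p) zz"
        unfolding zz_def by (simp add: linear_sum[OF lin2[of "fst p"]] linear_scale[OF lin2[of "fst p"]])
      finally show ?thesis by (simp add: \<mu>_def \<phi>_def)
    qed
    have H: "\<delta> \<le> \<mu> * t + (B x zz - B v zz)" if "v \<in> V" "f x \<le> ereal (c + t)" for x v t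
    proof -
      have "(x - v, t) \<in> C" unfolding C_def using that by auto
      from sep[OF this] show ?thesis by (simp add: sumeq linear_diff[OF lin1[of zz]])
    qed
    have mu0: "0 \<le> \<mu>"
    proof (rule ccontr)
      assume "\<not> 0 \<le> \<mu>"
      then have mn: "\<mu> < 0" by simp
      define Kc where "Kc = B x0 zz - B v0 zz"
      define t where "t = max (r0 - c) ((\<delta> - Kc) / \<mu> + 1)"
      have "f x0 \<le> ereal (c + t)" using r0 by (simp add: t_def)
      then have h1: "\<delta> \<le> \<mu> * t + Kc" unfolding Kc_def by (rule H[OF v0])
      have "(\<delta> - Kc) / \<mu> + 1 \<le> t" by (simp add: t_def)
      then have h2: "\<mu> * t \<le> \<mu> * ((\<delta> - Kc) / \<mu> + 1)" using mn by (simp add: mult_le_cancel_left)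
      have h3: "\<mu> * ((\<delta> - Kc) / \<mu> + 1) = \<delta> - Kc + \<mu>" using mn by (simp add: distrib_left)
      have "\<mu> * t \<le> \<delta> - Kc + \<mu>" using h2 h3 by simp
      with h1 show False using mn by linarith
    qed
    define M where "M = max 0 ((c - b) / \<delta>)"
    define ys where "ys = (if \<mu> > 0 then (- (1 / \<mu>)) *\<^sub>R zz else (- M) *\<^sub>R zz)"
    have G: "c \<le> r - B x ys + B v ys" if "v \<in> V" "f x = ereal r" for x v r
    proof (cases "\<mu> > 0")
      case True
      have h: "\<delta> \<le> \<mu> * (r - c) + (B x zz - B v zz)" using H[of v x "r - c"] that by simp
      have e1: "B x ys = - (B x zz) / \<mu>" "B v ys = - (B v zz) / \<mu>"
        using True by (simp_all add: ys_def linear_scale[OF lin2[of x]] linear_scale[OF lin2[of v]] linear_neg[OF lin2[of x]] linear_neg[OF lin2[of v]])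
      have e2: "\<mu> * (c + B x ys) = \<mu> * c - B x zz" "\<mu> * (r + B v ys) = \<mu> * r - B v zz"
        using True by (simp_all add: e1 right_diff_distrib)
      have h': "\<delta> \<le> \<mu> * r - \<mu> * c + B x zz - B v zz" using h by (simp add: right_diff_distrib)
      have "\<mu> * (c + B x ys) \<le> \<mu> * (r + B v ys)" unfolding e2 using h' \<delta> by linarith
      then have "c + B x ys \<le> r + B v ys" using mult_le_cancel_left_pos[OF True] by blast
      then show ?thesis by linarith
    next
      case False
      then have m0: "\<mu> = 0" using mu0 by simp
      have "\<delta> \<le> B x zz - B v zz" using H[of v x "r - c"] that m0 by simp
      moreover have "B x ys = - M * B x zz" "B v ys = - M * B v zz"
        using False by (simp_all add: ys_def linear_scale[OF lin2[of x]] linear_scale[OF lin2[of v]] linear_neg[OF lin2[of x]] linear_neg[OF lin2[of v]])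
      moreover have "b \<le> r" using b[of x] that by simp
      moreover have "c - b \<le> M * \<delta>"
      proof -
        have "(c - b) / \<delta> \<le> M" by (simp add: M_def)
        then have "(c - b) / \<delta> * \<delta> \<le> M * \<delta>" using \<delta> by (intro mult_right_mono) auto
        then show ?thesis using \<delta> by simp
      qed
      moreover have "M \<ge> 0" by (simp add: M_def)
      ultimately show ?thesis
      proof -
        assume a: "\<delta> \<le> B x zz - B v zz" "B x ys = - M * B x zz" "B v ys = - M * B v zz"
          "b \<le> r" "c - b \<le> M * \<delta>" "M \<ge> 0"
        have "M * \<delta> \<le> M * (B x zz - B v zz)" using a(1,6) by (simp add: mult_left_mono)
        then show ?thesis using a by (simp add: algebra_simps)
      qed
    qed
    have Fub: "fconj B f ys \<le> ereal (- c + B v ys)" if "v \<in> V" for v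
      unfolding fconj_def
    proof (intro SUP_least)
      fix x
      show "ereal (B x ys) - f x \<le> ereal (- c + B v ys)"
      proof (cases "f x")
        case (real r)
        then show ?thesis using G[OF that real] by simp
      qed (use f_nonneginf in auto)
    qed
    have Flb: "ereal (B x0 ys) - f x0 \<le> fconj B f ys" unfolding fconj_def by (intro SUP_upper) auto
    obtain F where F: "fconj B f ys = ereal F"
      using Fub[OF v0] Flb r0 by (cases "fconj B f ys") auto
    have S: "supp_fun B V (- ys) \<le> ereal (- c - F)"
      unfolding supp_fun_def
    proof (intro SUP_least)
      fix v assume vV: "v \<in> V"
      have "F \<le> - c + B v ys" using Fub[OF vV] F by simp
      moreover have "B v (- ys) = - B v ys" by (simp add: linear_neg[OF lin2[of v]])
      ultimately show "ereal (B v (- ys)) \<le> ereal (- c - F)" by simp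
    qed
    have "D \<le> fconj B f ys + supp_fun B V (- ys)" unfolding D_def by (rule INF_lower) simp
    also have "\<dots> \<le> ereal F + ereal (- c - F)" using F S by (intro add_mono) auto
    also have "\<dots> = ereal (- c)" by simp
    finally show ?thesis .
  qed
  have strong: "P \<le> - D"
  proof (rule ccontr)
    assume "\<not> P \<le> - D"
    then have "- D < P" by simp
    then obtain c where c: "- D < ereal c" "ereal c < P" using ereal_dense2[OF \<open>- D < P\<close>] by blast
    have "D \<le> ereal (- c)" using key[OF c(2)] .
    then have "D \<le> - ereal c" by simp
    then have "ereal c \<le> - D" using ereal_minus_le_minus[of "- D" "ereal c"] by (simp only: ereal_uminus_uminus)
    then show False using c(1) by simp
  qed
  have PD: "P = - D" by (rule antisym[OF strong weak])
  have Pn: "P \<noteq> -\<infinity>" using Pb by auto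
  from PD Pn show ?thesis unfolding P_def D_def by blast
qed



theorem mainTheorem17:
  fixes B :: "'x::real_vector \<Rightarrow> 'y::real_vector \<Rightarrow> real"
    and f :: "'x \<Rightarrow> ereal" and V :: "'x set"
  assumes dual: "separating_duality B"
    and f_nonneginf: "\<forall>x. f x \<noteq> -\<infinity>"
    and f_convex: "ereal_convex_fun f"
    and f_lsc: "lsc_on (weak_top B) f"
    and dom_cpt: "\<exists>K. compactin (weak_top B) K \<and> edom f \<subseteq> K"
    and V_closed: "closedin (weak_top B) V"
    and V_convex: "convex V"
  shows
    "((V \<inter> edom f \<noteq> {} \<or> V \<inter> (weak_top B closure_of edom f) = {}) \<longrightarrow>
       ((INF x\<in>V. f x) = - (INF y. fconj B f y + supp_fun B V (- y)) \<and>
        (INF x\<in>V. f x) \<noteq> -\<infinity>)) \<and>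
    (\<not> (V \<inter> edom f \<noteq> {} \<or> V \<inter> (weak_top B closure_of edom f) = {}) \<longrightarrow>
       (\<forall>W. closedin (weak_top B) W \<and> convex W \<and> W \<subseteq> weak_top B interior_of V \<longrightarrow>
          (INF x\<in>W. f x) = - (INF y. fconj B f y + supp_fun B W (- y)) \<and>
          (INF x\<in>W. f x) = \<infinity>))"
proof -
  have part1: "(V \<inter> edom f \<noteq> {} \<or> V \<inter> (weak_top B closure_of edom f) = {}) \<longrightarrow>
       ((INF x\<in>V. f x) = - (INF y. fconj B f y + supp_fun B V (- y)) \<and>
        (INF x\<in>V. f x) \<noteq> -\<infinity>)"
    using main_dual[OF dual f_nonneginf f_convex f_lsc dom_cpt V_closed V_convex] by blast
  have part2: "\<not> (V \<inter> edom f \<noteq> {} \<or> V \<inter> (weak_top B closure_of edom f) = {}) \<longrightarrow>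
       (\<forall>W. closedin (weak_top B) W \<and> convex W \<and> W \<subseteq> weak_top B interior_of V \<longrightarrow>
          (INF x\<in>W. f x) = - (INF y. fconj B f y + supp_fun B W (- y)) \<and>
          (INF x\<in>W. f x) = \<infinity>)"
  proof (intro impI allI)
    assume neg: "\<not> (V \<inter> edom f \<noteq> {} \<or> V \<inter> (weak_top B closure_of edom f) = {})"
    then have Vd: "V \<inter> edom f = {}" by blast
    fix W assume W: "closedin (weak_top B) W \<and> convex W \<and> W \<subseteq> weak_top B interior_of V"
    have md: "(INF x\<in>W. f x) = - (INF y. fconj B f y + supp_fun B W (- y))"
      using main_dual[OF dual f_nonneginf f_convex f_lsc dom_cpt, of W] W by blast
    have WV: "W \<subseteq> V" using W interior_of_subset[of "weak_top B" V] by blast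
    have inf: "f x = \<infinity>" if "x \<in> W" for x
    proof -
      have "x \<notin> edom f" using that WV Vd by blast
      then show ?thesis by (simp add: edom_def not_less)
    qed
    have "\<infinity> \<le> (INF x\<in>W. f x)" by (rule INF_greatest) (simp add: inf)
    then have "(INF x\<in>W. f x) = \<infinity>" by simp
    then show "(INF x\<in>W. f x) = - (INF y. fconj B f y + supp_fun B W (- y)) \<and> (INF x\<in>W. f x) = \<infinity>"
      using md by simp
  qed
  show ?thesis using part1 part2 by (rule conjI)
qed

end
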